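(* Let $\beta,\beta'$ be pseudo-Anosov 3-braids and suppose that for some $l,m\ge1$ the triple-weight train tracks $\mathcal T_l$ (for $\beta$) and $\mathcal T'_m$ (for $\beta'$) have the same 4-ratio. Then for all $t\ge1$, $\mathcal T_{l+t}$ and $\mathcal T'_{m+t}$ have the same 4-ratio, and their 4-tuples have the same type (both Type 1 or both Type 2).
   Context: Identify $B_3$ with the mapping class group of the 3-punctured disk $D_3$. A measured train track on $D_3$ is a smooth graph with trivalent switches where the three edges are tangent, each edge having a positive weight, satisfying at each switch: weight on one side = sum of the two weights on the other side; weights up to scaling. Maximal splitting $\tau\rightharpoonup\tau'$ splits simultaneously along all edges of largest weight (an edge of weight $a+b=c+d$ with neighbouring weights $a,b$ at one end and $c,d$ at the other is replaced by an edge of weight $|c-a|$). The paper fixes measured train tracks $\mathrm M(a,b),\mathrm W(a,b)$ ($a,b>0$) on $D_3$ with six edges and four switches ($\mathrm W(a,b)$ the $180^\circ$ rotation of $\mathrm M(a,b)$). For a pseudo-Anosov 3-braid $\beta$ there is a unique irrational $\alpha\in(0,1)$ (the MP-ratio) such that exactly one of $\mathrm M(1,\alpha),\mathrm M(\alpha,1),\mathrm W(\alpha,1),\mathrm W(1,\alpha)$ is invariant under $\beta$; call it $\tau_0$, let $n=\lfloor1/\alpha\rfloor$ and $\tau_0\rightharpoonup\tau_1\rightharpoonup\cdots$ the maximal splitting sequence. From $\tau_{n+4}$ on all train tracks have exactly three distinct edge weights; set $\mathcal T_k:=\tau_{n+3+k}$ ($k\ge1$). Writing the smallest weight of $\mathcal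 T_k$ as $\tfrac12(x_k+y_k\alpha)$ and the second smallest as $\tfrac12(z_k+w_k\alpha)$ with $x_k,y_k,z_k,w_k\in\mathbb Z$, $(x_k,y_k;z_k,w_k)$ is the 4-tuple and $\frac{x_k+y_k\alpha}{z_k+w_k\alpha}$ the 4-ratio of $\mathcal T_k$. Put $(x_0,y_0;z_0,w_0)=(1,-n;0,1)$. For each $k\ge0$ the 4-tuple of $\mathcal T_{k+1}$ equals either $(z_k-x_k,w_k-y_k;x_k,y_k)$, in which case it is said to be of Type 1, or $(x_k,y_k;z_k-x_k,w_k-y_k)$, in which case it is of Type 2. The same data for $\beta'$ are primed. *)

theory Defs
  imports Complex_Main
begin

text \<open>Abstract rendering of the 4-tuple data attached to the maximal splitting
sequence of a pseudo-Anosov 3-braid.  A 4-tuple (x, y, z, w) of integers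
encodes the smallest weight (x + y*alpha)/2 and the second smallest weight
(z + w*alpha)/2 of a triple-weight train track.  The sequence q is indexed so
that q k is the 4-tuple of T_k for k >= 1 and q 0 = (1, -n; 0, 1) with
n = floor (1/alpha).\<close>

type_synonym four_tuple = "int \<times> int \<times> int \<times> int"

definition tw_weight :: "real \<Rightarrow> int \<Rightarrow> int \<Rightarrow> real" where
  "tw_weight \<alpha> a b = (real_of_int a + real_of_int b * \<alpha>) / 2"

definition smallest_weight :: "real \<Rightarrow> four_tuple \<Rightarrow> real" where
  "smallest_weight \<alpha> t = (case t of (x, y, z, w) \<Rightarrow> tw_weight \<alpha> x y)"

definition second_weight :: "real \<Rightarrow> four_tuple \<Rightarrow> real" where
  "second_weight \<alpha> t = (case t of (x, y, z, w) \<Rightarrow> tw_weight \<alpha> z w)"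

definition four_ratio :: "real \<Rightarrow> four_tuple \<Rightarrow> real" where
  "four_ratio \<alpha> t = (case t of (x, y, z, w) \<Rightarrow>
     (real_of_int x + real_of_int y * \<alpha>) / (real_of_int z + real_of_int w * \<alpha>))"

definition type1 :: "(nat \<Rightarrow> four_tuple) \<Rightarrow> nat \<Rightarrow> bool" where
  "type1 q k = (case q k of (x, y, z, w) \<Rightarrow> q (Suc k) = (z - x, w - y, x, y))"

definition type2 :: "(nat \<Rightarrow> four_tuple) \<Rightarrow> nat \<Rightarrow> bool" where
  "type2 q k = (case q k of (x, y, z, w) \<Rightarrow> q (Suc k) = (x, y, z - x, w - y))"

text \<open>The facts recorded in the paper's setting about the 4-tuple sequence of a
pseudo-Anosov 3-braid with MP-ratio alpha.\<close>
definition MP_tuple_seq :: "real \<Rightarrow> (nat \<Rightarrow> four_tuple) \<Rightarrow> bool" where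
  "MP_tuple_seq \<alpha> q \<longleftrightarrow>
     0 < \<alpha> \<and> \<alpha> < 1 \<and> \<alpha> \<notin> \<rat> \<and>
     q 0 = (1, - \<lfloor>1 / \<alpha>\<rfloor>, 0, 1) \<and>
     (\<forall>k. type1 q k \<or> type2 q k) \<and>
     (\<forall>k\<ge>1. 0 < smallest_weight \<alpha> (q k) \<and> smallest_weight \<alpha> (q k) < second_weight \<alpha> (q k))"

end

theory Submission
  imports Defs
begin

definition fstep :: "real \<Rightarrow> real" where
  "fstep r = (if r > 1/2 then 1/r - 1 else r/(1-r))"

lemma step_lemma:
  assumes A: "MP_tuple_seq \<alpha> q" and k: "k \<ge> 1"
  shows "(type1 q k \<longleftrightarrow> four_ratio \<alpha> (q k) > 1/2) \<and>
         (type2 q k \<longleftrightarrow> four_ratio \<alpha> (q k) < 1/2) \<and>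
         four_ratio \<alpha> (q (Suc k)) = fstep (four_ratio \<alpha> (q k))"
proof -
  obtain x y z w where qk: "q k = (x,y,z,w)" by (cases "q k") auto
  define a where "a = real_of_int x + real_of_int y * \<alpha>"
  define b where "b = real_of_int z + real_of_int w * \<alpha>"
  have pos: "\<forall>j\<ge>1. 0 < smallest_weight \<alpha> (q j) \<and> smallest_weight \<alpha> (q j) < second_weight \<alpha> (q j)"
    and ty: "type1 q k \<or> type2 q k"
    using A unfolding MP_tuple_seq_def by auto
  have ab: "0 < a" "a < b" using pos k qk
    by (auto simp: smallest_weight_def second_weight_def tw_weight_def a_def b_def)
  have r: "four_ratio \<alpha> (q k) = a / b" using qk by (simp add: four_ratio_def a_def b_def)
  have ps: "0 < smallest_weight \<alpha> (q (Suc k)) \<and> smallest_weight \<alpha> (q (Suc k)) < second_weight \<alpha> (q (Suc k))"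
    using pos by auto
  have t1: "a/b > 1/2 \<and> four_ratio \<alpha> (q (Suc k)) = 1/(a/b) - 1" if "type1 q k"
  proof -
    have e: "q (Suc k) = (z - x, w - y, x, y)" using that qk by (simp add: type1_def)
    have "0 < b - a" "b - a < a" using ps e
      by (auto simp: smallest_weight_def second_weight_def tw_weight_def a_def b_def algebra_simps)
    moreover have "four_ratio \<alpha> (q (Suc k)) = (b - a) / a" using e
      by (simp add: four_ratio_def a_def b_def algebra_simps)
    ultimately show ?thesis using ab by (auto simp: field_simps)
  qed
  have t2: "a/b < 1/2 \<and> four_ratio \<alpha> (q (Suc k)) = (a/b)/(1 - a/b)" if "type2 q k"
  proof -
    have e: "q (Suc k) = (x, y, z - x, w - y)" using that qk by (simp add: type2_def)
    have "smallest_weight \<alpha> (q (Suc k)) = a/2" "second_weight \<alpha> (q (Suc k)) = (b-a)/2"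
      using e by (simp_all add: smallest_weight_def second_weight_def tw_weight_def a_def b_def algebra_simps)
    then have "a < b - a" using ps by simp
    moreover have "four_ratio \<alpha> (q (Suc k)) = a / (b - a)" using e
      by (simp add: four_ratio_def a_def b_def algebra_simps)
    ultimately show ?thesis using ab by (auto simp: field_simps)
  qed
  show ?thesis
  proof (cases "type1 q k")
    case True
    with t1 t2 show ?thesis unfolding r fstep_def by auto
  next
    case False
    with ty have "type2 q k" by auto
    with t2 False ty show ?thesis unfolding r fstep_def by auto
  qed
qed

theorem lemma7p3:
  fixes \<alpha> \<alpha>' :: real and q q' :: "nat \<Rightarrow> four_tuple" and l m :: nat
  assumes "MP_tuple_seq \<alpha> q" and "MP_tuple_seq \<alpha>' q'"
    and "l \<ge> 1" and "m \<ge> 1"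
    and "four_ratio \<alpha> (q l) = four_ratio \<alpha>' (q' m)"
  shows "\<forall>t\<ge>1. four_ratio \<alpha> (q (l + t)) = four_ratio \<alpha>' (q' (m + t)) \<and>
           ((type1 q (l + t - 1) \<and> type1 q' (m + t - 1)) \<or>
            (type2 q (l + t - 1) \<and> type2 q' (m + t - 1)))"
proof -
  have eq: "four_ratio \<alpha> (q (l + t)) = four_ratio \<alpha>' (q' (m + t))" for t
  proof (induction t)
    case 0 then show ?case using assms(5) by simp
  next
    case (Suc t)
    have "four_ratio \<alpha> (q (Suc (l + t))) = fstep (four_ratio \<alpha> (q (l + t)))"
      using step_lemma[OF assms(1), of "l+t"] assms(3) by auto
    moreover have "four_ratio \<alpha>' (q' (Suc (m + t))) = fstep (four_ratio \<alpha>' (q' (m + t)))"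
      using step_lemma[OF assms(2), of "m+t"] assms(4) by auto
    ultimately show ?case using Suc by simp
  qed
  show ?thesis
  proof (intro allI impI conjI)
    fix t :: nat assume t: "t \<ge> 1"
    show "four_ratio \<alpha> (q (l + t)) = four_ratio \<alpha>' (q' (m + t))" by (rule eq)
    obtain s where s: "t = Suc s" using t by (cases t) auto
    have "l + t - 1 = l + s" "m + t - 1 = m + s" using s by auto
    moreover have "(type1 q (l + s) \<and> type1 q' (m + s)) \<or> (type2 q (l + s) \<and> type2 q' (m + s))"
    proof -
      have h1: "(type1 q (l+s) \<longleftrightarrow> four_ratio \<alpha> (q (l+s)) > 1/2) \<and> (type2 q (l+s) \<longleftrightarrow> four_ratio \<alpha> (q (l+s)) < 1/2)"
        using step_lemma[OF assms(1), of "l+s"] assms(3) by auto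
      have h2: "(type1 q' (m+s) \<longleftrightarrow> four_ratio \<alpha>' (q' (m+s)) > 1/2) \<and> (type2 q' (m+s) \<longleftrightarrow> four_ratio \<alpha>' (q' (m+s)) < 1/2)"
        using step_lemma[OF assms(2), of "m+s"] assms(4) by auto
      have ty: "type1 q (l+s) \<or> type2 q (l+s)" using assms(1) unfolding MP_tuple_seq_def by auto
      show ?thesis using h1 h2 ty eq[of s] by auto
    qed
    ultimately show "(type1 q (l + t - 1) \<and> type1 q' (m + t - 1)) \<or>
            (type2 q (l + t - 1) \<and> type2 q' (m + t - 1))" by simp
  qed
qed

end
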